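(* Let $n,m\in\mathbb{N}$ with $\gcd(n,m)=1$ and let $\{R_j^{nm,n}\}_{j\in I_{nm,n}}$ be a system of representatives of the right cosets in $\Gamma_0(nm)\backslash\Gamma_0(n)$. Then for every $j\in I_{nm,n}$ there exists a matrix $A(j)\in X_m^\star$ such that $B_m R_j^{nm,n}A(j)^{-1}\in\Gamma_0(n)$, and the map $j\mapsto A(j)$ is a bijection from $I_{nm,n}$ onto $X_m^\star$.
   Context: $\Gamma_0(n)=\{\begin{pmatrix}a&b\\c&d\end{pmatrix}\in SL(2,\mathbb{Z}):n\mid c\}$. $B_m=\begin{pmatrix}m&0\\0&1\end{pmatrix}$. $X_m^\star=\{\begin{pmatrix}c&b\\0&m/c\end{pmatrix}:c\ge1,\ c\mid m,\ 0\le b\le m/c-1,\ \gcd(c,b,m/c)=1\}$. $I_{nm,n}=\{1,\dots,[\Gamma_0(n):\Gamma_0(nm)]\}$. *)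

theory Defs
  imports "HOL-Analysis.Analysis"
begin

text \<open>2x2 matrices are elements of type 'a^2^2 (rows indexed first):
  the entry in row i, column j of M is M $ i $ j.\<close>

definition mat2 :: "'a::zero \<Rightarrow> 'a \<Rightarrow> 'a \<Rightarrow> 'a \<Rightarrow> 'a^2^2" where
  "mat2 a b c d = vector [vector [a, b], vector [c, d]]"

definition ratm :: "int^2^2 \<Rightarrow> rat^2^2" where
  "ratm M = (\<chi> i j. of_int (M $ i $ j))"

definition SL2Z :: "(int^2^2) set" where
  "SL2Z = {M. det M = 1}"

definition Gamma0 :: "nat \<Rightarrow> (int^2^2) set" where
  "Gamma0 n = {M \<in> SL2Z. int n dvd M $ 2 $ 1}"

definition Bm :: "nat \<Rightarrow> int^2^2" where
  "Bm m = mat2 (int m) 0 0 1"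

definition Xstar :: "nat \<Rightarrow> (int^2^2) set" where
  "Xstar m = {mat2 c b 0 (int m div c) | c b.
      c \<ge> 1 \<and> c dvd int m \<and> 0 \<le> b \<and> b \<le> int m div c - 1
      \<and> gcd (gcd c b) (int m div c) = 1}"

definition rcoset2 :: "(int^2^2) set \<Rightarrow> int^2^2 \<Rightarrow> (int^2^2) set" where
  "rcoset2 H g = (\<lambda>h. h ** g) ` H"

definition rcosets2 :: "(int^2^2) set \<Rightarrow> (int^2^2) set \<Rightarrow> (int^2^2) set set" where
  "rcosets2 H G = rcoset2 H ` G"

definition idx :: "nat \<Rightarrow> nat \<Rightarrow> nat" where
  "idx n m = card (rcosets2 (Gamma0 (n * m)) (Gamma0 n))"

definition Iset :: "nat \<Rightarrow> nat \<Rightarrow> nat set" where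
  "Iset n m = {1 .. idx n m}"

definition rep_system :: "nat \<Rightarrow> nat \<Rightarrow> (nat \<Rightarrow> int^2^2) \<Rightarrow> bool" where
  "rep_system n m R \<longleftrightarrow>
     (\<forall>j \<in> Iset n m. R j \<in> Gamma0 n) \<and>
     bij_betw (\<lambda>j. rcoset2 (Gamma0 (n * m)) (R j)) (Iset n m)
              (rcosets2 (Gamma0 (n * m)) (Gamma0 n))"

end

theory Submission
  imports Defs "HOL-Computational_Algebra.Primes"
begin

lemma mat2_nth[simp]:
  "mat2 a b c d $ 1 $ 1 = a" "mat2 a b c d $ 1 $ 2 = b"
  "mat2 a b c d $ 2 $ 1 = c" "mat2 a b c d $ 2 $ 2 = d"
  by (simp_all add: mat2_def)

lemma mat_eqI:
  fixes M N :: "'a^2^2"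
  assumes "M$1$1 = N$1$1" "M$1$2 = N$1$2" "M$2$1 = N$2$1" "M$2$2 = N$2$2"
  shows "M = N"
  using assms by (simp add: vec_eq_iff forall_2)

lemma mult_nth[simp]:
  fixes M N :: "'a::semiring_1^2^2"
  shows "(M ** N)$1$1 = M$1$1 * N$1$1 + M$1$2 * N$2$1"
    "(M ** N)$1$2 = M$1$1 * N$1$2 + M$1$2 * N$2$2"
    "(M ** N)$2$1 = M$2$1 * N$1$1 + M$2$2 * N$2$1"
    "(M ** N)$2$2 = M$2$1 * N$1$2 + M$2$2 * N$2$2"
  by (simp_all add: matrix_matrix_mult_def sum_2)

lemma mat1_nth[simp]:
  "(mat 1 :: 'a::zero_neq_one^2^2)$1$1 = 1" "(mat 1 :: 'a::zero_neq_one^2^2)$1$2 = 0"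
  "(mat 1 :: 'a::zero_neq_one^2^2)$2$1 = 0" "(mat 1 :: 'a::zero_neq_one^2^2)$2$2 = 1"
  by (simp_all add: mat_def)

lemma ratm_nth[simp]: "ratm M $ i $ j = of_int (M $ i $ j)"
  by (simp add: ratm_def)

lemma ratm_mult: "ratm (M ** N) = ratm M ** ratm N"
  by (rule mat_eqI) simp_all

lemma ratm_inj: "ratm M = ratm N \<Longrightarrow> M = N"
  by (rule mat_eqI) (simp_all add: ratm_def vec_eq_iff)

lemma t_exists:
  fixes b c e :: int
  assumes e0: "e \<noteq> 0" and g: "gcd (gcd c b) e = 1"
  shows "\<exists>t. coprime (c*t - b) e"
proof -
  define S where "S = {p \<in> prime_factors e. \<not> p dvd b}"
  define t where "t = \<Prod>S"
  have finS: "finite S" unfolding S_def by auto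
  have "coprime (c*t - b) e"
  proof (rule ccontr)
    assume nc: "\<not> coprime (c*t - b) e"
    have "gcd (c*t - b) e \<noteq> 0" using e0 by simp
    moreover have "\<not> is_unit (gcd (c*t - b) e)" using nc
      by (simp add: coprime_iff_gcd_eq_1 is_unit_gcd)
    ultimately obtain p where p: "p dvd gcd (c*t - b) e" "prime p"
      using prime_divisor_exists by blast
    have pd1: "p dvd c*t - b" and pe: "p dvd e" using p(1) by auto
    show False
    proof (cases "p dvd b")
      case True
      have "\<not> p dvd c"
      proof
        assume "p dvd c"
        then have "p dvd gcd (gcd c b) e" using True pe by simp
        then show False using g p(2) by (metis not_prime_unit)
      qed
      moreover have "\<not> p dvd t"
      proof
        assume "p dvd t"
        then obtain q where q: "q \<in> S" "p dvd q"
          using prime_dvd_prod_iff[OF finS p(2)] unfolding t_def by auto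
        have "prime q" "\<not> q dvd b" using q(1) unfolding S_def by auto
        then have "p = q" using primes_dvd_imp_eq[OF p(2)] q(2) by auto
        then show False using True \<open>\<not> q dvd b\<close> by simp
      qed
      moreover have "p dvd c * t"
      proof -
        have "p dvd (c*t - b) + b" using pd1 True by (rule dvd_add)
        then show ?thesis by simp
      qed
      ultimately show False using p(2) by (simp add: prime_dvd_mult_iff)
    next
      case False
      have "p \<in> S" unfolding S_def using False pe p(2) e0
        by (auto intro: prime_factorsI)
      then have "p dvd t" unfolding t_def using dvd_prodI[OF finS, of p "\<lambda>x. x"] by simp
      then have "p dvd c * t" by simp
      then have "p dvd c * t - (c*t - b)" using pd1 by (rule dvd_diff)
      then have "p dvd b" by simp
      then show False using False by simp
    qed
  qed
  then show ?thesis by blast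
qed

definition adj2 :: "int^2^2 \<Rightarrow> int^2^2" where
  "adj2 M = mat2 (M$2$2) (-M$1$2) (-M$2$1) (M$1$1)"

lemma adj2_nth[simp]: "adj2 M $1$1 = M$2$2" "adj2 M $1$2 = -M$1$2"
  "adj2 M $2$1 = -M$2$1" "adj2 M $2$2 = M$1$1"
  by (simp_all add: adj2_def)

lemma det2: "det (M::int^2^2) = M$1$1 * M$2$2 - M$1$2 * M$2$1" by (rule det_2)

lemma adj2_left: "det M = 1 \<Longrightarrow> adj2 M ** M = mat 1"
  by (rule mat_eqI) (simp_all add: det2 algebra_simps)
lemma adj2_right: "det M = 1 \<Longrightarrow> M ** adj2 M = mat 1"
  by (rule mat_eqI) (simp_all add: det2 algebra_simps)
lemma det_adj2: "det (adj2 M) = det M" by (simp add: det2 algebra_simps)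

lemma det_mult2: "det ((M::int^2^2) ** N) = det M * det N" by (rule det_mul)

definition hnf :: "nat \<Rightarrow> int^2^2 \<Rightarrow> bool" where
  "hnf m A \<longleftrightarrow> A$2$1 = 0 \<and> A$1$1 \<ge> 1 \<and> A$1$1 * A$2$2 = int m \<and> 0 \<le> A$1$2 \<and> A$1$2 < A$2$2"

definition PP :: "nat \<Rightarrow> int^2^2 \<Rightarrow> int^2^2 \<Rightarrow> bool" where
  "PP m g A \<longleftrightarrow> (\<exists>d. det d = 1 \<and> Bm m ** g = d ** A) \<and> hnf m A"

lemma Bm_nth[simp]: "Bm m $1$1 = int m" "Bm m $1$2 = 0" "Bm m $2$1 = 0" "Bm m $2$2 = 1"
  by (simp_all add: Bm_def)

lemma hnf_exists:
  fixes M :: "int^2^2"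
  assumes dm: "det M = int m" and m1: "m \<ge> 1"
  shows "\<exists>d A. det d = 1 \<and> M = d ** A \<and> hnf m A"
proof -
  define x y z w where "x = M$1$1" "y = M$1$2" "z = M$2$1" "w = M$2$2"
  have dxy: "x*w - y*z = int m" using dm unfolding x_y_z_w_def det2 by simp
  define g where "g = gcd x z"
  have g0: "g \<noteq> 0"
  proof
    assume "g = 0" then have "x = 0" "z = 0" unfolding g_def by auto
    then show False using dxy m1 by simp
  qed
  then have gpos: "g > 0" unfolding g_def by (simp add: le_less)
  obtain x1 where x1: "x = g * x1" unfolding g_def by (meson gcd_dvd1 dvdE)
  obtain z1 where z1: "z = g * z1" unfolding g_def by (meson gcd_dvd2 dvdE)
  obtain u v where uv: "u * x + v * z = g" using bezout_int[of x z] unfolding g_def by blast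
  have uv1: "u * x1 + v * z1 = 1"
  proof -
    have "g * (u * x1 + v * z1) = g * 1" using uv x1 z1 by (simp add: algebra_simps)
    then show ?thesis using g0 by simp
  qed
  define e where "e = x1 * w - z1 * y"
  have ge: "g * e = int m" using dxy x1 z1 unfolding e_def by (simp add: algebra_simps)
  have "0 < g * e" using ge m1 by simp
  then have epos: "e > 0" using zero_less_mult_pos gpos by blast
  define b0 where "b0 = u * y + v * w"
  define k where "k = b0 div e"
  define b where "b = b0 mod e"
  have bk: "b + k * e = b0" unfolding b_def k_def by simp
  define d where "d = mat2 x1 (x1*k - v) z1 (z1*k + u)"
  define A where "A = mat2 g b 0 e"
  have "det d = 1" unfolding d_def det2 using uv1 by (simp add: algebra_simps)
  moreover have "M = d ** A"
  proof (rule mat_eqI)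
    show "M$1$1 = (d ** A)$1$1" unfolding d_def A_def using x1 x_y_z_w_def by (simp add: mult.commute)
    show "M$2$1 = (d ** A)$2$1" unfolding d_def A_def using z1 x_y_z_w_def by (simp add: mult.commute)
    have "x1 * b + (x1 * k - v) * e = x1 * b0 - v * e" by (simp add: bk[symmetric] algebra_simps)
    also have "\<dots> = y * (u * x1 + v * z1)" unfolding b0_def e_def by (simp add: algebra_simps)
    finally show "M$1$2 = (d ** A)$1$2" unfolding d_def A_def using uv1 x_y_z_w_def by simp
    have "z1 * b + (z1 * k + u) * e = z1 * b0 + u * e" by (simp add: bk[symmetric] algebra_simps)
    also have "\<dots> = w * (u * x1 + v * z1)" unfolding b0_def e_def by (simp add: algebra_simps)
    finally show "M$2$2 = (d ** A)$2$2" unfolding d_def A_def using uv1 x_y_z_w_def by simp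
  qed
  moreover have "hnf m A" unfolding hnf_def A_def using gpos ge epos unfolding b_def by simp
  ultimately show ?thesis by blast
qed

lemma hnf_unique:
  assumes dg: "det G = 1" and GA: "G ** A1 = A2" and h1: "hnf m A1" and h2: "hnf m A2"
  shows "A1 = A2"
proof -
  have a: "A1$2$1 = 0" "A1$1$1 \<ge> 1" "0 \<le> A1$1$2" "A1$1$2 < A1$2$2"
    using h1 unfolding hnf_def by auto
  have b: "A2$2$1 = 0" "A2$1$1 \<ge> 1" "0 \<le> A2$1$2" "A2$1$2 < A2$2$2"
    using h2 unfolding hnf_def by auto
  have E: "(G ** A1)$i$j = A2$i$j" for i j using GA by simp
  have e21: "G$2$1 * A1$1$1 = 0" using E[of 2 1] a b by simp
  then have r0: "G$2$1 = 0" using a by simp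
  then have ps: "G$1$1 * G$2$2 = 1" using dg unfolding det2 by simp
  have e11: "G$1$1 * A1$1$1 = A2$1$1" using E[of 1 1] a by simp
  have "G$1$1 > 0"
  proof (rule ccontr)
    assume "\<not> G$1$1 > 0"
    then have "G$1$1 * A1$1$1 \<le> 0" using a by (simp add: mult_nonpos_nonneg)
    then show False using e11 b by simp
  qed
  then have p1: "G$1$1 = 1" and s1: "G$2$2 = 1" using ps by (auto simp: pos_zmult_eq_1_iff)
  have e22: "A2$2$2 = A1$2$2" using E[of 2 2] r0 s1 by simp
  have e12: "A2$1$2 = A1$1$2 + G$1$2 * A1$2$2" using E[of 1 2] p1 by simp
  have q0: "G$1$2 = 0"
  proof (rule ccontr)
    assume "G$1$2 \<noteq> 0"
    then consider "G$1$2 \<ge> 1" | "G$1$2 \<le> -1" by linarith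
    then show False
    proof cases
      case 1
      then have "1 * A1$2$2 \<le> G$1$2 * A1$2$2" using a
        by (intro mult_right_mono) auto
      then show False using e12 e22 a b by linarith
    next
      case 2
      then have "G$1$2 * A1$2$2 \<le> (-1) * A1$2$2" using a
        by (intro mult_right_mono) auto
      then show False using e12 e22 a b by linarith
    qed
  qed
  show ?thesis
    by (rule mat_eqI) (use e11 p1 e12 q0 e22 a b in auto)
qed

lemma PP_unique: "PP m g A1 \<Longrightarrow> PP m g A2 \<Longrightarrow> A1 = A2"
proof -
  assume a1: "PP m g A1" and a2: "PP m g A2"
  then obtain d1 d2 where d: "det d1 = 1" "Bm m ** g = d1 ** A1" "det d2 = 1" "Bm m ** g = d2 ** A2"
    and h: "hnf m A1" "hnf m A2" unfolding PP_def by blast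
  have "adj2 d2 ** (d2 ** A2) = A2"
    using d(3) by (simp add: matrix_mul_assoc adj2_left)
  then have "(adj2 d2 ** d1) ** A1 = A2"
    using d(2,4) by (simp add: matrix_mul_assoc[symmetric])
  moreover have "det (adj2 d2 ** d1) = 1" using d by (simp add: det_mult2 det_adj2)
  ultimately show ?thesis using hnf_unique h by blast
qed

lemma SL2Z_det: "M \<in> SL2Z \<longleftrightarrow> det M = 1" by (simp add: SL2Z_def)

lemma PP_coset:
  assumes h: "det h = 1" "int m dvd h$2$1" and P: "PP m g A"
  shows "PP m (h ** g) A"
proof -
  obtain d where d: "det d = 1" "Bm m ** g = d ** A" and hA: "hnf m A" using P unfolding PP_def by blast
  obtain k where k: "h$2$1 = int m * k" using h(2) by (auto elim: dvdE)
  define h' where "h' = mat2 (h$1$1) (int m * h$1$2) k (h$2$2)"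
  have "Bm m ** h = h' ** Bm m" by (rule mat_eqI) (simp_all add: h'_def k mult.commute)
  then have "Bm m ** (h ** g) = (h' ** d) ** A"
    by (metis d(2) matrix_mul_assoc)
  moreover have "det (h' ** d) = 1" using h(1) d(1) k unfolding det_mult2
    by (simp add: det2 h'_def algebra_simps)
  ultimately show ?thesis using hA unfolding PP_def by blast
qed

lemma Gamma0_mult: "a \<in> Gamma0 N \<Longrightarrow> b \<in> Gamma0 N \<Longrightarrow> a ** b \<in> Gamma0 N"
  by (simp add: Gamma0_def SL2Z_det det_mult2)
lemma Gamma0_adj: "a \<in> Gamma0 N \<Longrightarrow> adj2 a \<in> Gamma0 N"
  by (simp add: Gamma0_def SL2Z_det det_adj2)
lemma Gamma0_one: "mat 1 \<in> Gamma0 N"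
  by (simp add: Gamma0_def SL2Z_det det2)

lemma rcoset_absorb:
  assumes "h \<in> Gamma0 N"
  shows "rcoset2 (Gamma0 N) (h ** g) = rcoset2 (Gamma0 N) g"
proof
  show "rcoset2 (Gamma0 N) (h ** g) \<subseteq> rcoset2 (Gamma0 N) g"
    unfolding rcoset2_def using assms Gamma0_mult by (force simp: matrix_mul_assoc)
  show "rcoset2 (Gamma0 N) g \<subseteq> rcoset2 (Gamma0 N) (h ** g)"
  proof
    fix x assume "x \<in> rcoset2 (Gamma0 N) g"
    then obtain k where k: "k \<in> Gamma0 N" "x = k ** g" unfolding rcoset2_def by blast
    have dh: "det h = 1" using assms by (simp add: Gamma0_def SL2Z_det)
    have "(k ** adj2 h) ** (h ** g) = k ** ((adj2 h ** h) ** g)" by (simp add: matrix_mul_assoc)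
    then have "x = (k ** adj2 h) ** (h ** g)"
      using k(2) adj2_left[OF dh] by simp
    moreover have "k ** adj2 h \<in> Gamma0 N" using k(1) assms Gamma0_mult Gamma0_adj by blast
    ultimately show "x \<in> rcoset2 (Gamma0 N) (h ** g)" unfolding rcoset2_def by blast
  qed
qed

lemma PP_inj:
  assumes g1: "g1 \<in> Gamma0 n" and g2: "g2 \<in> Gamma0 n" and cop: "coprime n m"
    and P1: "PP m g1 A" and P2: "PP m g2 A"
  shows "rcoset2 (Gamma0 (n*m)) g1 = rcoset2 (Gamma0 (n*m)) g2"
proof -
  obtain d1 where d1: "det d1 = 1" "Bm m ** g1 = d1 ** A" using P1 unfolding PP_def by blast
  obtain d2 where d2: "det d2 = 1" "Bm m ** g2 = d2 ** A" using P2 unfolding PP_def by blast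
  have dg2: "det g2 = 1" using g2 by (simp add: Gamma0_def SL2Z_det)
  define h where "h = g1 ** adj2 g2"
  define G where "G = d1 ** adj2 d2"
  have "G ** (Bm m ** g2) = d1 ** ((adj2 d2 ** d2) ** A)"
    unfolding G_def d2(2) by (simp add: matrix_mul_assoc)
  then have "Bm m ** g1 = G ** (Bm m ** g2)"
    using d1(2) adj2_left[OF d2(1)] by simp
  then have "Bm m ** g1 ** adj2 g2 = G ** Bm m ** (g2 ** adj2 g2)"
    by (simp add: matrix_mul_assoc)
  then have "Bm m ** h = G ** Bm m"
    unfolding h_def using adj2_right[OF dg2] by (simp add: matrix_mul_assoc)
  then have "(Bm m ** h)$2$1 = (G ** Bm m)$2$1" by simp
  then have "h$2$1 = G$2$1 * int m" by simp
  then have mdvd: "int m dvd h$2$1" by simp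
  have hG: "h \<in> Gamma0 n" unfolding h_def using g1 g2 Gamma0_mult Gamma0_adj by blast
  then have ndvd: "int n dvd h$2$1" by (simp add: Gamma0_def)
  have "int n * int m dvd h$2$1" using divides_mult[OF ndvd mdvd] cop by simp
  then have hN: "h \<in> Gamma0 (n*m)" using hG by (simp add: Gamma0_def)
  have "g1 = h ** g2" unfolding h_def using adj2_left[OF dg2] by (simp flip: matrix_mul_assoc)
  then show ?thesis using rcoset_absorb[OF hN] by simp
qed

lemma PP_Xstar:
  assumes g: "g \<in> Gamma0 n" and cop: "coprime n m" and P: "PP m g A"
  shows "A \<in> Xstar m \<and> (\<exists>d \<in> Gamma0 n. Bm m ** g = d ** A)"
proof -
  obtain d where d: "det d = 1" "Bm m ** g = d ** A" and hA: "hnf m A" using P unfolding PP_def by blast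
  define c b e where "c = A$1$1" "b = A$1$2" "e = A$2$2"
  have a: "A$2$1 = 0" "c \<ge> 1" "c * e = int m" "0 \<le> b" "b < e"
    using hA unfolding hnf_def c_b_e_def by auto
  have cdvd: "c dvd int m" using a(3) by (metis dvd_triv_left)
  have ediv: "e = int m div c" using a(2,3) by (metis nonzero_mult_div_cancel_left not_one_le_zero)
  have Aeq: "A = mat2 c b 0 (int m div c)"
    by (rule mat_eqI) (simp_all add: a(1) c_b_e_def ediv[unfolded c_b_e_def, symmetric])
  have E: "(Bm m ** g)$i$j = (d ** A)$i$j" for i j using d(2) by simp
  have g21: "g$2$1 = d$2$1 * c" using E[of 2 1] a(1) c_b_e_def by simp
  have g22: "g$2$2 = d$2$1 * b + d$2$2 * e" using E[of 2 2] c_b_e_def by simp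
  have dg: "g$1$1 * g$2$2 - g$1$2 * g$2$1 = 1" using g by (simp add: Gamma0_def SL2Z_det det2)
  define G where "G = gcd (gcd c b) e"
  have "G dvd c" "G dvd b" "G dvd e" unfolding G_def by (meson gcd_dvd1 gcd_dvd2 dvd_trans)+
  then have "G dvd g$2$1" "G dvd g$2$2" unfolding g21 g22 by auto
  then have "G dvd g$1$1 * g$2$2 - g$1$2 * g$2$1" by auto
  then have "G dvd 1" using dg by simp
  then have G1: "G = 1" unfolding G_def by simp
  have G1': "gcd (gcd c b) (int m div c) = 1" using G1 ediv unfolding G_def by simp
  have X: "A \<in> Xstar m"
  proof -
    have "b \<le> int m div c - 1" using a(5) ediv by simp
    then show ?thesis unfolding Xstar_def Aeq mem_Collect_eq using a cdvd G1'
      by (intro exI[of _ c] exI[of _ b]) simp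
  qed
  have "coprime (int n) (c * e)" using cop a(3) by simp
  then have cnc: "coprime (int n) c" by simp
  have "int n dvd g$2$1" using g by (simp add: Gamma0_def)
  then have "int n dvd d$2$1" unfolding g21 using coprime_dvd_mult_left_iff[OF cnc] by simp
  then have "d \<in> Gamma0 n" using d(1) by (simp add: Gamma0_def SL2Z_det)
  then show ?thesis using X d(2) by blast
qed

lemma surj_construct:
  assumes X: "A \<in> Xstar m" and cop: "coprime n m" and m1: "m \<ge> 1"
  shows "\<exists>g \<in> Gamma0 n. PP m g A"
proof -
  obtain c b where A: "A = mat2 c b 0 (int m div c)" and c: "c \<ge> 1" "c dvd int m" "0 \<le> b"
    "b \<le> int m div c - 1" and gg: "gcd (gcd c b) (int m div c) = 1"
    using X unfolding Xstar_def by auto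
  define e where "e = int m div c"
  have ce: "c * e = int m" using c(2) unfolding e_def by simp
  have e0: "e \<noteq> 0" using ce m1 by auto
  have g1: "gcd (gcd c b) e = 1" using gg unfolding e_def .
  obtain t where t: "coprime (c*t - b) e" using t_exists[OF e0 g1] by blast
  have "coprime (int n) (c * e)" using cop ce by simp
  then have "coprime e (int n)" by (simp add: coprime_commute)
  then have "coprime e (int n * (c*t - b))" using t by (simp add: coprime_commute)
  then obtain u v where uv: "u * e + v * (int n * (c*t - b)) = 1"
    using bezout_int[of e "int n * (c*t - b)"] by auto
  define r where "r = - v"
  define d where "d = mat2 e (c*t - b) (int n * r) u"
  define g where "g = mat2 1 t (int n * r * c) (int n * r * b + u * e)"
  have "det d = 1" using uv unfolding d_def r_def det2 by (simp add: algebra_simps)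
  moreover have "Bm m ** g = d ** A"
    unfolding A e_def[symmetric] by (rule mat_eqI) (simp_all add: d_def g_def algebra_simps flip: ce)
  moreover have "g \<in> Gamma0 n"
    using uv unfolding g_def r_def Gamma0_def SL2Z_det det2 by (simp add: algebra_simps)
  moreover have "hnf m A" unfolding hnf_def A using c ce e_def by simp
  ultimately show ?thesis unfolding PP_def by blast
qed

lemma ratm_inv:
  assumes hA: "hnf m A" and m1: "m \<ge> 1"
  shows "ratm A ** matrix_inv (ratm A) = mat 1"
proof -
  have a: "A$2$1 = 0" "A$1$1 * A$2$2 = int m" using hA unfolding hnf_def by auto
  have a': "(of_int (A$1$1) :: rat) * of_int (A$2$2) = of_nat m"
    using arg_cong[OF a(2), of "of_int :: int \<Rightarrow> rat"] by simp
  have a'': "(of_int (A$2$2) :: rat) * of_int (A$1$1) = of_nat m" using a' by (simp add: mult.commute)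
  have m0: "(of_nat m :: rat) \<noteq> 0" using m1 by simp
  define Q :: "rat^2^2" where "Q = mat2 (of_int (A$2$2) / of_nat m) (- of_int (A$1$2) / of_nat m) 0
     (of_int (A$1$1) / of_nat m)"
  have "ratm A ** Q = mat 1"
    using m0 by (intro mat_eqI) (simp_all add: Q_def a(1) a' a'' divide_simps algebra_simps)
  moreover have "Q ** ratm A = mat 1"
    using m0 by (intro mat_eqI) (simp_all add: Q_def a(1) a' a'' divide_simps algebra_simps)
  ultimately have "ratm A ** Q = mat 1 \<and> Q ** ratm A = mat 1" by blast
  then have "ratm A ** matrix_inv (ratm A) = mat 1 \<and> matrix_inv (ratm A) ** ratm A = mat 1"
    unfolding matrix_inv_def by (rule someI)
  then show ?thesis by simp
qed

lemma det_Bm: "det (Bm m) = int m" by (simp add: det2)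

theorem mainTheorem5:
  fixes n m :: nat and R :: "nat \<Rightarrow> int^2^2"
  assumes "n \<ge> 1" and "m \<ge> 1" and "coprime n m"
    and "rep_system n m R"
  shows "\<exists>A :: nat \<Rightarrow> int^2^2.
           (\<forall>j \<in> Iset n m. A j \<in> Xstar m \<and>
              ratm (Bm m) ** ratm (R j) ** matrix_inv (ratm (A j)) \<in> ratm ` Gamma0 n)
           \<and> bij_betw A (Iset n m) (Xstar m)"
proof -
  note m1 = assms(2) and cop = assms(3)
  have RG: "\<And>j. j \<in> Iset n m \<Longrightarrow> R j \<in> Gamma0 n" and
    bij: "bij_betw (\<lambda>j. rcoset2 (Gamma0 (n * m)) (R j)) (Iset n m)
              (rcosets2 (Gamma0 (n * m)) (Gamma0 n))"
    using assms(4) unfolding rep_system_def by auto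
  have exP: "\<exists>A. PP m g A" if g: "g \<in> Gamma0 n" for g
  proof -
    have "det (Bm m ** g) = int m" using g by (simp add: det_mult2 det_Bm Gamma0_def SL2Z_det)
    then obtain d A where "det d = 1" "Bm m ** g = d ** A" "hnf m A"
      using hnf_exists m1 by blast
    then show ?thesis unfolding PP_def by blast
  qed
  define Af where "Af j = (SOME A. PP m (R j) A)" for j
  have PAf: "PP m (R j) (Af j)" if "j \<in> Iset n m" for j
    unfolding Af_def using exP[OF RG[OF that]] by (rule someI_ex)
  have part1: "Af j \<in> Xstar m \<and>
              ratm (Bm m) ** ratm (R j) ** matrix_inv (ratm (Af j)) \<in> ratm ` Gamma0 n"
    if j: "j \<in> Iset n m" for j
  proof -
    obtain d where X: "Af j \<in> Xstar m" and d: "d \<in> Gamma0 n" "Bm m ** R j = d ** Af j"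
      using PP_Xstar[OF RG[OF j] cop PAf[OF j]] by blast
    have hA: "hnf m (Af j)" using PAf[OF j] unfolding PP_def by blast
    have "ratm (Bm m) ** ratm (R j) ** matrix_inv (ratm (Af j))
        = ratm d ** (ratm (Af j) ** matrix_inv (ratm (Af j)))"
      by (simp add: ratm_mult[symmetric] d(2) matrix_mul_assoc)
    also have "\<dots> = ratm d" using ratm_inv[OF hA m1] by simp
    finally show ?thesis using X d(1) by blast
  qed
  have inj: "inj_on Af (Iset n m)"
  proof (rule inj_onI)
    fix i j assume i: "i \<in> Iset n m" and j: "j \<in> Iset n m" and eq: "Af i = Af j"
    have "rcoset2 (Gamma0 (n*m)) (R i) = rcoset2 (Gamma0 (n*m)) (R j)"
      using PP_inj[OF RG[OF i] RG[OF j] cop PAf[OF i]] PAf[OF j] eq by simp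
    then show "i = j" using bij i j unfolding bij_betw_def inj_on_def by blast
  qed
  have img: "Af ` Iset n m = Xstar m"
  proof
    show "Af ` Iset n m \<subseteq> Xstar m" using part1 by blast
    show "Xstar m \<subseteq> Af ` Iset n m"
    proof
      fix X assume X: "X \<in> Xstar m"
      obtain g where g: "g \<in> Gamma0 n" "PP m g X" using surj_construct[OF X cop m1] by blast
      have "rcoset2 (Gamma0 (n*m)) g \<in> rcosets2 (Gamma0 (n * m)) (Gamma0 n)"
        using g(1) unfolding rcosets2_def by blast
      then obtain j where j: "j \<in> Iset n m" and jc: "rcoset2 (Gamma0 (n*m)) (R j) = rcoset2 (Gamma0 (n*m)) g"
        using bij unfolding bij_betw_def by (metis (no_types, lifting) imageE)
      have "R j \<in> rcoset2 (Gamma0 (n*m)) (R j)"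
        unfolding rcoset2_def using Gamma0_one[of "n*m"] by (metis image_eqI matrix_mul_lid)
      then obtain h where h: "h \<in> Gamma0 (n*m)" "R j = h ** g" using jc unfolding rcoset2_def by auto
      have hd: "det h = 1" "int m dvd h$2$1" using h(1) unfolding Gamma0_def SL2Z_det
        by (auto intro: dvd_mult_left)
      have "PP m (R j) X" using PP_coset[OF hd g(2)] h(2) by simp
      then have "Af j = X" using PP_unique PAf[OF j] by blast
      then show "X \<in> Af ` Iset n m" using j by blast
    qed
  qed
  show ?thesis
    by (rule exI[of _ Af]) (use part1 inj img in \<open>auto simp: bij_betw_def\<close>)
qed

end
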